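(* Let $n\ge 1$ be an integer, $x>0$, and $0<v<nx$. Put $m\equiv\lfloor v/x\rfloor$, $r\equiv v-mx$ and $y\equiv x-r$. Then every vector in the convex hull $\mathrm{Conv}(\Gamma(m,y,r))$ is an optimal solution of \[ \min\; f(\boldsymbol v)\quad\text{s.t.}\quad \boldsymbol v\in\Lambda(v). \]
   Context: For $v>0$, $\Lambda(v)$ is the set of vectors in $\mathbb{R}^n$ with nonnegative coordinates summing to $v$. For $\boldsymbol v=(v_1,\dots,v_n)$, $f(\boldsymbol v)\equiv\sum_{1\le l\le k\le n}\bigl(x-\sum_{i=l}^k v_i\bigr)^+$, where $a^+=\max\{a,0\}$. For integers $0\le m<n$ and reals $y,r\ge0$, let $\Delta_y\equiv\lfloor\frac{n+1}{m+1}\rfloor$ and $\Delta_r\equiv\lfloor\frac{n+1}{m+2}\rfloor$. The set $\Gamma(m,y,r)$ ("duo-equidistant vectors") consists of all $\boldsymbol v=\boldsymbol v_y+\boldsymbol v_r\in\mathbb{R}^n$ where: $\boldsymbol v_y$ has $i$-th coordinate $y$ if $i\in\{\sum_{k=1}^{j}\Delta_{y,k}: 1\le j\le m\}$ and $0$ otherwise, for some integers $\Delta_{y,1},\dots,\Delta_{y,m+1}\in\{\Delta_y,\Delta_y+1\}$ with $\sum_{k=1}^{m+1}\Delta_{y,k}=n+1$; and $\boldsymbol v_r$ has $i$-th coordinate $r$ if $i\in\{\sum_{k=1}^{j}\Delta_{r,k}: 1\le j\le m+1\}$ and $0$ otherwise, for some integers $\Delta_{r,1},\dots,\Delta_{r,m+2}\in\{\Delta_r,\Delta_r+1\}$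 with $\sum_{k=1}^{m+2}\Delta_{r,k}=n+1$. *)

theory Defs
  imports "HOL-Analysis.Analysis"
begin

text \<open>Vectors in R^n are represented as functions nat => real whose coordinates
  1..n are the relevant ones (and which vanish outside {1..n}).\<close>

definition Lambda :: "nat \<Rightarrow> real \<Rightarrow> (nat \<Rightarrow> real) set" where
  "Lambda n v = {w. (\<forall>i\<in>{1..n}. 0 \<le> w i) \<and> (\<forall>i. i \<notin> {1..n} \<longrightarrow> w i = 0)
                    \<and> (\<Sum>i=1..n. w i) = v}"

definition fobj :: "nat \<Rightarrow> real \<Rightarrow> (nat \<Rightarrow> real) \<Rightarrow> real" where
  "fobj n x w = (\<Sum>l=1..n. \<Sum>k=l..n. max (x - (\<Sum>i=l..k. w i)) 0)"

definition spike_vec :: "nat \<Rightarrow> (nat \<Rightarrow> nat) \<Rightarrow> real \<Rightarrow> nat \<Rightarrow> real" where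
  "spike_vec J d c (i::nat) = (if i \<in> {(\<Sum>k=1..j. d k) | j. 1 \<le> j \<and> j \<le> J} then c else 0)"

definition gaps_ok :: "nat \<Rightarrow> nat \<Rightarrow> nat \<Rightarrow> (nat \<Rightarrow> nat) \<Rightarrow> bool" where
  "gaps_ok n N D d \<longleftrightarrow> (\<forall>k\<in>{1..N}. d k = D \<or> d k = D + 1) \<and> (\<Sum>k=1..N. d k) = n + 1"

definition Gamma :: "nat \<Rightarrow> nat \<Rightarrow> real \<Rightarrow> real \<Rightarrow> (nat \<Rightarrow> real) set" where
  "Gamma n m y r = {(\<lambda>i. spike_vec m dy y i + spike_vec (m+1) dr r i) | dy dr.
      gaps_ok n (m+1) ((n+1) div (m+1)) dy \<and> gaps_ok n (m+2) ((n+1) div (m+2)) dr}"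

text \<open>Convex hull, written out explicitly (set of finite convex combinations),
  since nat => real is not a real_vector instance in the library.\<close>
definition conv_hull :: "(nat \<Rightarrow> real) set \<Rightarrow> (nat \<Rightarrow> real) set" where
  "conv_hull S = {w. \<exists>(K::nat) c u. (\<forall>j<K. 0 \<le> c j \<and> u j \<in> S) \<and> (\<Sum>j<K. c j) = 1
                      \<and> w = (\<lambda>i. \<Sum>j<K. c j * u j i)}"

end

theory Submission
  imports Defs
begin


definition cnt :: "(nat \<Rightarrow> nat) \<Rightarrow> nat \<Rightarrow> nat \<Rightarrow> nat" where
  "cnt \<kappa> n k = card {a. a \<le> n \<and> \<kappa> a = k}"

lemma cnt_Suc: "cnt \<kappa> (Suc n) k = cnt \<kappa> n k + (if \<kappa> (Suc n) = k then 1 else 0)"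
proof -
  have "{a. a \<le> Suc n \<and> \<kappa> a = k} = {a. a \<le> n \<and> \<kappa> a = k} \<union> (if \<kappa> (Suc n) = k then {Suc n} else {})"
    by (auto simp: le_Suc_eq)
  moreover have "finite {a. a \<le> n \<and> \<kappa> a = k}" by simp
  ultimately show ?thesis unfolding cnt_def by (auto simp: card_insert_if)
qed

lemma cnt_0: "cnt \<kappa> 0 k = (if \<kappa> 0 = k then 1 else 0)"
proof -
  have "{a. a \<le> 0 \<and> \<kappa> a = k} = (if \<kappa> 0 = k then {0} else {})" by auto
  then show ?thesis unfolding cnt_def by simp
qed

lemma sum_same_eq_cnt: "(\<Sum>a<Suc n. (if \<kappa> a = k then 1 else 0 :: real)) = real (cnt \<kappa> n k)"
proof -
  have "(\<Sum>a<Suc n. (if \<kappa> a = k then 1 else 0 :: real)) = (\<Sum>a\<in>{a\<in>{..<Suc n}. \<kappa> a = k}. 1)"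
    by (subst sum.inter_filter) auto
  also have "{a\<in>{..<Suc n}. \<kappa> a = k} = {a. a \<le> n \<and> \<kappa> a = k}" by auto
  finally show ?thesis unfolding cnt_def by simp
qed

lemma pairs_identity:
  fixes \<kappa> :: "nat \<Rightarrow> nat"
  assumes "finite K" "\<forall>a\<le>n. \<kappa> a \<in> K"
  shows "2 * (\<Sum>b\<le>n. \<Sum>a<b. (if \<kappa> a = \<kappa> b then 1 else 0 :: real))
         = (\<Sum>k\<in>K. real (cnt \<kappa> n k) * (real (cnt \<kappa> n k) - 1))"
  using assms(2)
proof (induction n)
  case 0
  show ?case by (simp, intro sum.neutral ballI) (simp add: cnt_0)
next
  case (Suc n)
  let ?k0 = "\<kappa> (Suc n)"
  have k0: "?k0 \<in> K" using Suc.prems by auto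
  have IH: "2 * (\<Sum>b\<le>n. \<Sum>a<b. (if \<kappa> a = \<kappa> b then 1 else 0 :: real))
         = (\<Sum>k\<in>K. real (cnt \<kappa> n k) * (real (cnt \<kappa> n k) - 1))"
    using Suc by auto
  have "(\<Sum>k\<in>K. real (cnt \<kappa> (Suc n) k) * (real (cnt \<kappa> (Suc n) k) - 1))
      = (\<Sum>k\<in>K. real (cnt \<kappa> n k) * (real (cnt \<kappa> n k) - 1) + (if ?k0 = k then 2 * real (cnt \<kappa> n k) else 0))"
    by (rule sum.cong) (auto simp: cnt_Suc algebra_simps)
  also have "\<dots> = (\<Sum>k\<in>K. real (cnt \<kappa> n k) * (real (cnt \<kappa> n k) - 1)) + 2 * real (cnt \<kappa> n ?k0)"
    using k0 assms(1) by (simp add: sum.distrib)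
  finally have R: "(\<Sum>k\<in>K. real (cnt \<kappa> (Suc n) k) * (real (cnt \<kappa> (Suc n) k) - 1)) = (\<Sum>k\<in>K. real (cnt \<kappa> n k) * (real (cnt \<kappa> n k) - 1)) + 2 * real (cnt \<kappa> n ?k0)" .
  have "(\<Sum>b\<le>Suc n. \<Sum>a<b. (if \<kappa> a = \<kappa> b then 1 else 0 :: real))
     = (\<Sum>b\<le>n. \<Sum>a<b. (if \<kappa> a = \<kappa> b then 1 else 0 :: real)) + (\<Sum>a<Suc n. (if \<kappa> a = ?k0 then 1 else 0 :: real))"
    by (simp only: sum.atMost_Suc)
  also have "(\<Sum>a<Suc n. (if \<kappa> a = ?k0 then 1 else 0 :: real)) = real (cnt \<kappa> n ?k0)"
    by (rule sum_same_eq_cnt)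
  finally show ?case using IH R by simp
qed

lemma sum_cnt:
  assumes "finite K" "\<forall>a\<le>n. \<kappa> a \<in> K"
  shows "(\<Sum>k\<in>K. real (cnt \<kappa> n k)) = real n + 1"
proof -
  have "(\<Sum>k\<in>K. real (cnt \<kappa> n k)) = (\<Sum>k\<in>K. \<Sum>a<Suc n. (if \<kappa> a = k then 1 else 0 :: real))"
    by (rule sum.cong[OF refl]) (rule sum_same_eq_cnt[symmetric])
  also have "\<dots> = (\<Sum>a<Suc n. \<Sum>k\<in>K. (if \<kappa> a = k then 1 else 0 :: real))"
    by (rule sum.swap)
  also have "\<dots> = (\<Sum>a<Suc n. 1)"
    by (rule sum.cong) (use assms in \<open>auto simp: sum.delta'\<close>)
  finally show ?thesis by simp
qed

lemma quad_ineq: "real c * (real c - 1) \<ge> 2 * real D * real c - real D * (real D + 1)"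
proof -
  have "(real c - real D) * (real c - real D - 1) \<ge> 0"
  proof (cases "c \<le> D")
    case True then show ?thesis by (intro mult_nonpos_nonpos) auto
  next
    case False then have "real c \<ge> real D + 1" by auto
    then show ?thesis by (intro mult_nonneg_nonneg) auto
  qed
  then show ?thesis by (simp add: algebra_simps)
qed

lemma quad_eq: "c = D \<or> c = D + 1 \<Longrightarrow> real c * (real c - 1) = 2 * real D * real c - real D * (real D + 1)"
  by (auto simp: algebra_simps)

lemma pairs_lower:
  fixes \<kappa> :: "nat \<Rightarrow> nat"
  assumes "\<forall>a\<le>n. \<kappa> a < p"
  shows "2 * (\<Sum>b\<le>n. \<Sum>a<b. (if \<kappa> a = \<kappa> b then 1 else 0 :: real))
         \<ge> 2 * real D * (real n + 1) - real p * real D * (real D + 1)"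
proof -
  have K: "\<forall>a\<le>n. \<kappa> a \<in> {..<p}" using assms by auto
  have "(\<Sum>k<p. real (cnt \<kappa> n k) * (real (cnt \<kappa> n k) - 1))
      \<ge> (\<Sum>k<p. 2 * real D * real (cnt \<kappa> n k) - real D * (real D + 1))"
    by (rule sum_mono) (rule quad_ineq)
  moreover have "(\<Sum>k<p. 2 * real D * real (cnt \<kappa> n k) - real D * (real D + 1))
     = 2 * real D * (\<Sum>k<p. real (cnt \<kappa> n k)) - real p * real D * (real D + 1)"
    by (simp add: sum_subtractf sum_distrib_left)
  ultimately show ?thesis
    using pairs_identity[OF _ K] sum_cnt[OF _ K] by simp
qed



definition Ypos :: "(nat \<Rightarrow> nat) \<Rightarrow> nat \<Rightarrow> nat" where
  "Ypos d j = (\<Sum>k=1..j. d k)"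

definition kap :: "nat \<Rightarrow> (nat \<Rightarrow> nat) \<Rightarrow> nat \<Rightarrow> nat" where
  "kap J d a = card {j\<in>{1..J}. Ypos d j \<le> a}"

lemma Ypos_0[simp]: "Ypos d 0 = 0" by (simp add: Ypos_def)
lemma Ypos_Suc: "Ypos d (Suc j) = Ypos d j + d (Suc j)"
  by (simp add: Ypos_def)

lemma Ypos_strict:
  assumes "\<forall>k. 1 \<le> k \<and> k \<le> N \<longrightarrow> d k \<ge> 1" "i < j" "j \<le> N"
  shows "Ypos d i < Ypos d j"
  using assms(2,3)
proof (induction j)
  case 0 then show ?case by simp
next
  case (Suc j)
  have "d (Suc j) \<ge> 1" using assms(1) Suc.prems by auto
  then have "Ypos d j < Ypos d (Suc j)" by (simp add: Ypos_Suc)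
  then show ?case using Suc by (cases "i < j") (auto simp: less_Suc_eq)
qed

lemma Ypos_mono:
  assumes "\<forall>k. 1 \<le> k \<and> k \<le> N \<longrightarrow> d k \<ge> 1" "i \<le> j" "j \<le> N"
  shows "Ypos d i \<le> Ypos d j"
  using Ypos_strict[OF assms(1) _ assms(3), of i] assms(2) by (cases "i = j") auto

lemma spike_mem: "i \<in> {(\<Sum>k=1..j. d k) | j. 1 \<le> j \<and> j \<le> J} \<longleftrightarrow> (\<exists>j\<in>{1..J}. Ypos d j = i)"
  by (auto simp: Ypos_def)

lemma kap_Suc:
  assumes "\<forall>k. 1 \<le> k \<and> k \<le> J \<longrightarrow> d k \<ge> 1"
  shows "kap J d (Suc a) = kap J d a + (if (\<exists>j\<in>{1..J}. Ypos d j = Suc a) then 1 else 0)"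
proof -
  define A where "A = {j\<in>{1..J}. Ypos d j \<le> a}"
  define B where "B = {j\<in>{1..J}. Ypos d j = Suc a}"
  have U: "{j\<in>{1..J}. Ypos d j \<le> Suc a} = A \<union> B"
    unfolding A_def B_def by auto
  have D: "A \<inter> B = {}" unfolding A_def B_def by auto
  have C: "card B = (if (\<exists>j\<in>{1..J}. Ypos d j = Suc a) then 1 else 0)"
  proof (cases "\<exists>j\<in>{1..J}. Ypos d j = Suc a")
    case True
    then obtain j0 where j0: "j0 \<in> {1..J}" "Ypos d j0 = Suc a" by auto
    have "B = {j0}"
    proof (rule set_eqI, rule iffI)
      fix j assume "j \<in> B"
      then have j: "j \<in> {1..J}" "Ypos d j = Suc a" unfolding B_def by auto
      show "j \<in> {j0}"
      proof (rule ccontr)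
        assume "j \<notin> {j0}"
        then have "j < j0 \<or> j0 < j" by auto
        then show False
        proof
          assume "j < j0"
          then have "Ypos d j < Ypos d j0" using Ypos_strict[OF assms, of j j0] j0(1) by simp
          then show False using j(2) j0(2) by simp
        next
          assume "j0 < j"
          then have "Ypos d j0 < Ypos d j" using Ypos_strict[OF assms, of j0 j] j(1) by simp
          then show False using j(2) j0(2) by simp
        qed
      qed
    next
      fix j assume "j \<in> {j0}"
      then show "j \<in> B" using j0 unfolding B_def by simp
    qed
    then show ?thesis using True by simp
  next
    case False
    then have "B = {}" unfolding B_def by auto
    then show ?thesis using False by simp
  qed
  have "kap J d (Suc a) = card (A \<union> B)" unfolding kap_def U ..
  also have "\<dots> = card A + card B"
    by (rule card_Un_disjoint) (use D in \<open>auto simp: A_def B_def\<close>)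
  finally show ?thesis unfolding C by (simp add: kap_def A_def)
qed

lemma kap_0:
  assumes "\<forall>k. 1 \<le> k \<and> k \<le> J \<longrightarrow> d k \<ge> 1"
  shows "kap J d 0 = 0"
proof -
  have "{j\<in>{1..J}. Ypos d j \<le> 0} = {}"
  proof (rule equals0I)
    fix j assume j: "j \<in> {j\<in>{1..J}. Ypos d j \<le> 0}"
    then have "Ypos d 0 < Ypos d j" using Ypos_strict[OF assms, of 0 j] by auto
    then show False using j by simp
  qed
  then show ?thesis by (simp add: kap_def)
qed

lemma spike_prefix:
  assumes "\<forall>k. 1 \<le> k \<and> k \<le> J \<longrightarrow> d k \<ge> 1"
  shows "(\<Sum>i=1..a. spike_vec J d c i) = c * real (kap J d a)"
proof (induction a)
  case 0 then show ?case using kap_0[OF assms] by simp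
next
  case (Suc a)
  have "(\<Sum>i=1..Suc a. spike_vec J d c i) = (\<Sum>i=1..a. spike_vec J d c i) + spike_vec J d c (Suc a)"
    by simp
  also have "spike_vec J d c (Suc a) = (if (\<exists>j\<in>{1..J}. Ypos d j = Suc a) then c else 0)"
    unfolding spike_vec_def spike_mem by simp
  finally show ?case using Suc kap_Suc[OF assms, of a] by (auto simp: algebra_simps)
qed

lemma kap_mono:
  "a \<le> b \<Longrightarrow> kap J d a \<le> kap J d b"
  unfolding kap_def by (rule card_mono) auto

lemma kap_le: "kap J d a \<le> J"
proof -
  have "kap J d a \<le> card {1..J}" unfolding kap_def by (rule card_mono) auto
  then show ?thesis by simp
qed

lemma kap_eq:
  assumes "\<forall>k. 1 \<le> k \<and> k \<le> J+1 \<longrightarrow> d k \<ge> 1" "k \<le> J" "Ypos d k \<le> a" "a < Ypos d (k+1)"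
  shows "kap J d a = k"
proof -
  have "{j\<in>{1..J}. Ypos d j \<le> a} = {1..k}"
  proof (rule set_eqI, rule iffI)
    fix j assume j: "j \<in> {j\<in>{1..J}. Ypos d j \<le> a}"
    show "j \<in> {1..k}"
    proof (rule ccontr)
      assume "j \<notin> {1..k}"
      then have "k + 1 \<le> j" using j by auto
      then have "Ypos d (k+1) \<le> Ypos d j" using Ypos_mono[OF assms(1), of "k+1" j] j by auto
      then show False using j assms(4) by auto
    qed
  next
    fix j assume j: "j \<in> {1..k}"
    then have "Ypos d j \<le> Ypos d k" using Ypos_mono[OF assms(1), of j k] assms(2) by auto
    then show "j \<in> {j\<in>{1..J}. Ypos d j \<le> a}" using j assms(2,3) by auto
  qed
  then show ?thesis by (simp add: kap_def)
qed

lemma kap_exists: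
  assumes "\<forall>k. 1 \<le> k \<and> k \<le> J+1 \<longrightarrow> d k \<ge> 1" "Ypos d (J+1) = n+1" "a \<le> n"
  shows "\<exists>k\<le>J. Ypos d k \<le> a \<and> a < Ypos d (k+1)"
proof -
  let ?A = "{j. j \<le> J \<and> Ypos d j \<le> a}"
  have fin: "finite ?A" by simp
  have ne: "0 \<in> ?A" by simp
  define k where "k = Max ?A"
  have kA: "k \<in> ?A" unfolding k_def using fin ne by (intro Max_in) auto
  have "a < Ypos d (k+1)"
  proof (cases "k = J")
    case True then show ?thesis using assms by simp
  next
    case False
    then have "k + 1 \<le> J" using kA by auto
    moreover have "k + 1 \<notin> ?A"
    proof
      assume "k + 1 \<in> ?A"
      then have "k + 1 \<le> k" unfolding k_def using fin by (intro Max_ge) auto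
      then show False by simp
    qed
    ultimately show ?thesis by auto
  qed
  then show ?thesis using kA by auto
qed

lemma cnt_kap:
  assumes "\<forall>k. 1 \<le> k \<and> k \<le> J+1 \<longrightarrow> d k \<ge> 1" "Ypos d (J+1) = n+1" "k \<le> J"
  shows "cnt (kap J d) n k = d (k+1)"
proof -
  have A1: "\<forall>k. 1 \<le> k \<and> k \<le> J \<longrightarrow> d k \<ge> 1" using assms(1) by auto
  have "{a. a \<le> n \<and> kap J d a = k} = {Ypos d k..<Ypos d (k+1)}"
  proof (rule set_eqI, rule iffI)
    fix a assume a: "a \<in> {a. a \<le> n \<and> kap J d a = k}"
    then obtain k' where k': "k' \<le> J" "Ypos d k' \<le> a" "a < Ypos d (k'+1)"
      using kap_exists[OF assms(1,2)] by blast
    then have "kap J d a = k'" using kap_eq[OF assms(1)] by blast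
    then show "a \<in> {Ypos d k..<Ypos d (k+1)}" using a k' by auto
  next
    fix a assume a: "a \<in> {Ypos d k..<Ypos d (k+1)}"
    have "Ypos d (k+1) \<le> Ypos d (J+1)" using Ypos_mono[OF assms(1), of "k+1" "J+1"] assms(3) by auto
    then have "a \<le> n" using a assms(2) by auto
    moreover have "kap J d a = k" using kap_eq[OF assms(1) assms(3)] a by auto
    ultimately show "a \<in> {a. a \<le> n \<and> kap J d a = k}" by auto
  qed
  then show ?thesis unfolding cnt_def by (simp add: Ypos_Suc[of d k, simplified])
qed



lemma ind_eq: "(indicator {p..q} :: real \<Rightarrow> real) = (\<lambda>t. if t \<in> {p..q} then 1 else 0)"
  by (auto simp: indicator_def)

lemma ind_integrable: "(indicator {p..q} :: real \<Rightarrow> real) integrable_on {c..d}"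
  unfolding ind_eq integrable_restrict_Int Int_atLeastAtMost by (rule integrable_const_ivl)

lemma ind_integral:
  assumes "c \<le> p" "q \<le> d"
  shows "integral {c..d} (indicator {p..q} :: real \<Rightarrow> real) = max (q - p) 0"
proof -
  have sub: "{p..q} \<inter> {c..d} = {p..q}" using assms by auto
  have "integral {c..d} (indicator {p..q} :: real \<Rightarrow> real) = integral {p..q} (\<lambda>_. 1::real)"
    unfolding ind_eq Henstock_Kurzweil_Integration.integral_restrict_Int sub ..
  also have "\<dots> = max (q - p) 0"
    by (cases "p \<le> q") auto
  finally show ?thesis .
qed

lemma integral_split_shift:
  fixes g :: "real \<Rightarrow> real"
  assumes "g integrable_on {c..c + real K * h}" "h \<ge> 0"
  shows "integral {c..c + real K * h} g = (\<Sum>k<K. integral {c..c+h} (\<lambda>t. g (t + real k * h)))"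
  using assms(1)
proof (induction K)
  case 0 then show ?case by simp
next
  case (Suc K)
  have le1: "c \<le> c + real K * h" using assms(2) by simp
  have le2: "c + real K * h \<le> c + real (Suc K) * h" using assms(2) by (simp add: algebra_simps)
  have int1: "g integrable_on {c..c + real K * h}"
    by (rule integrable_subinterval_real[OF Suc.prems]) (use le2 in auto)
  have "integral {c..c + real (Suc K) * h} g = integral {c..c + real K * h} g + integral {c + real K * h..c + real (Suc K) * h} g"
    using Henstock_Kurzweil_Integration.integral_combine[OF le1 le2 Suc.prems] by simp
  also have "integral {c + real K * h..c + real (Suc K) * h} g = integral {c..c+h} (\<lambda>t. g (t + real K * h))"
    using integral_shift_real_ivl[where f=g and a="c + real K * h" and c="real K * h" and b="c + real (Suc K) * h"]
    by (simp add: algebra_simps)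
  finally show ?case using Suc.IH[OF int1] by simp
qed

definition Lf :: "nat \<Rightarrow> nat \<Rightarrow> real" where
  "Lf n p = real ((n+1) div p) * (real n + 1) - real p * real ((n+1) div p) * (real ((n+1) div p) + 1) / 2"

lemma floor_facts:
  assumes "u \<ge> (0::real)"
  shows "real (nat \<lfloor>u\<rfloor>) \<le> u" "u < real (nat \<lfloor>u\<rfloor>) + 1"
proof -
  have "0 \<le> \<lfloor>u\<rfloor>" using assms by simp
  then have e: "real (nat \<lfloor>u\<rfloor>) = of_int \<lfloor>u\<rfloor>" by (simp add: of_nat_nat)
  show "real (nat \<lfloor>u\<rfloor>) \<le> u" unfolding e by (rule of_int_floor_le)
  show "u < real (nat \<lfloor>u\<rfloor>) + 1" unfolding e by (rule real_of_int_floor_add_one_gt)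
qed

lemma pair_window:
  fixes x t sa sb :: real
  assumes x: "x > 0" and t: "t \<le> 0" and sa: "0 \<le> sa" and sab: "sa \<le> sb"
    and eq: "nat \<lfloor>(sa - t)/x\<rfloor> = nat \<lfloor>(sb - t)/x\<rfloor>"
  shows "t + real (nat \<lfloor>(sa - t)/x\<rfloor>) * x \<in> {sb - x..sa}"
proof -
  let ?k = "nat \<lfloor>(sa - t)/x\<rfloor>"
  have ua: "0 \<le> (sa - t)/x" "0 \<le> (sb - t)/x" using x t sa sab by auto
  have "real ?k \<le> (sa - t)/x" using floor_facts(1)[OF ua(1)] .
  then have A: "t + real ?k * x \<le> sa" using x by (simp add: field_simps)
  have "(sb - t)/x < real ?k + 1" using floor_facts(2)[OF ua(2)] eq by simp
  then have B: "sb - t < (real ?k + 1) * x" using x by (simp add: field_simps)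
  show ?thesis using A B by (auto simp: algebra_simps)
qed

lemma kappa_bound:
  fixes x t s :: real
  assumes x: "x > 0" and t: "t \<le> 0" and s: "0 \<le> s" and b: "s - t < real M * x"
  shows "nat \<lfloor>(s - t)/x\<rfloor> < M"
proof -
  have u: "0 \<le> (s - t)/x" using x t s by auto
  have "(s - t)/x < real M" using b x by (simp add: field_simps)
  then have "real (nat \<lfloor>(s - t)/x\<rfloor>) < real M" using floor_facts(1)[OF u] by linarith
  then show ?thesis by simp
qed

lemma LB_main:
  fixes S :: "nat \<Rightarrow> real" and x v :: real and m n :: nat
  assumes mono: "\<And>a b. a \<le> b \<Longrightarrow> b \<le> n \<Longrightarrow> S a \<le> S b" and S0: "S 0 = 0" and Sn: "S n = v"
    and x: "x > 0" and m1: "real m * x \<le> v" and m2: "v < (real m + 1) * x"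
  shows "(\<Sum>b\<le>n. \<Sum>a<b. max (x - (S b - S a)) 0) \<ge> (x - (v - real m * x)) * Lf n (m+1) + (v - real m * x) * Lf n (m+2)"
proof -
  define r where "r = v - real m * x"
  define y where "y = x - r"
  have r0: "0 \<le> r" and rx: "r < x" using m1 m2 by (auto simp: r_def algebra_simps)
  have Snn: "\<And>a. a \<le> n \<Longrightarrow> 0 \<le> S a" using mono[of 0] S0 by auto
  have Sv: "\<And>a. a \<le> n \<Longrightarrow> S a \<le> v" using mono Sn by auto
  define T where "T t = (\<Sum>b\<le>n. \<Sum>a<b. indicator {S b - x .. S a} t :: real)" for t
  have Tint: "T integrable_on {c..d}" for c d
    unfolding T_def by (intro integrable_sum finite_atMost finite_lessThan ind_integrable)
  define E where "E = (real m + 1) * x"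
  have "integral {-x..E} T = (\<Sum>b\<le>n. \<Sum>a<b. integral {-x..E} (indicator {S b - x .. S a}))"
    unfolding T_def
    by (subst integral_sum, simp, intro integrable_sum finite_lessThan ind_integrable,
        rule sum.cong[OF refl], subst integral_sum, auto intro: ind_integrable)
  also have "\<dots> = (\<Sum>b\<le>n. \<Sum>a<b. max (x - (S b - S a)) 0)"
  proof (intro sum.cong refl)
    fix b a assume b: "b \<in> {..n}" and a: "a \<in> {..<b}"
    have "-x \<le> S b - x" using Snn b by auto
    moreover have "S a \<le> E" using Sv[of a] a b m2 unfolding E_def by auto
    ultimately show "integral {-x..E} (indicator {S b - x .. S a}) = max (x - (S b - S a)) 0"
      by (subst ind_integral) (auto simp: algebra_simps)
  qed
  finally have f_eq: "(\<Sum>b\<le>n. \<Sum>a<b. max (x - (S b - S a)) 0) = integral {-x..E} T" by simp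
  have E_eq: "E = -x + real (m+2) * x" unfolding E_def by (simp add: algebra_simps)
  have "integral {-x..E} T = (\<Sum>k<m+2. integral {-x..-x+x} (\<lambda>t. T (t + real k * x)))"
    unfolding E_eq by (rule integral_split_shift) (use Tint x in auto)
  also have "\<dots> = integral {-x..0} (\<lambda>t. \<Sum>k<m+2. T (t + real k * x))"
  proof -
    have "(\<lambda>t. T (t + real k * x)) integrable_on {-x..0}" for k
      using integrable_shift_real_ivl[OF Tint[of "-x + real k * x" "real k * x"], of "real k * x"] by simp
    then show ?thesis by (subst integral_sum) auto
  qed
  finally have f_eq2: "(\<Sum>b\<le>n. \<Sum>a<b. max (x - (S b - S a)) 0) = integral {-x..0} (\<lambda>t. \<Sum>k<m+2. T (t + real k * x))"
    using f_eq by simp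
  define F where "F t = (\<Sum>k<m+2. T (t + real k * x))" for t
  have Fint: "F integrable_on {c..d}" for c d
  proof -
    have "(\<lambda>t. T (t + real k * x)) integrable_on {c..d}" for k
      using integrable_shift_real_ivl[OF Tint[of "c + real k * x" "d + real k * x"], of "real k * x"] by simp
    then show ?thesis unfolding F_def by (intro integrable_sum) auto
  qed
  have Fge: "F t \<ge> Lf n p" if t: "-x \<le> t" "t \<le> 0" and p: "\<forall>a\<le>n. nat \<lfloor>(S a - t)/x\<rfloor> < p" for t p
  proof -
    define \<kappa> where "\<kappa> a = nat \<lfloor>(S a - t)/x\<rfloor>" for a
    have "F t = (\<Sum>b\<le>n. \<Sum>a<b. \<Sum>k<m+2. indicator {S b - x .. S a} (t + real k * x))"
      unfolding F_def T_def
      by (subst sum.swap, rule sum.cong[OF refl], subst sum.swap, rule refl)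
    also have "\<dots> \<ge> (\<Sum>b\<le>n. \<Sum>a<b. (if \<kappa> a = \<kappa> b then 1 else 0 :: real))"
    proof (intro sum_mono)
      fix b a assume b: "b \<in> {..n}" and a: "a \<in> {..<b}"
      show "(if \<kappa> a = \<kappa> b then 1 else 0) \<le> (\<Sum>k<m+2. indicator {S b - x .. S a} (t + real k * x) :: real)"
      proof (cases "\<kappa> a = \<kappa> b")
        case True
        have sa: "0 \<le> S a" "S a \<le> S b" using Snn mono a b by auto
        have mem: "t + real (\<kappa> a) * x \<in> {S b - x .. S a}"
          using pair_window[OF x t(2) sa] True unfolding \<kappa>_def by auto
        have "S a - t < real (m+2) * x" using Sv[of a] a b t m2 by (auto simp: algebra_simps)
        then have "\<kappa> a < m+2" unfolding \<kappa>_def using kappa_bound[OF x t(2) sa(1)] by blast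
        then have "indicator {S b - x .. S a} (t + real (\<kappa> a) * x) \<le> (\<Sum>k<m+2. indicator {S b - x .. S a} (t + real k * x) :: real)"
          by (intro member_le_sum) auto
        then show ?thesis using True mem by simp
      next
        case False
        have "0 \<le> (\<Sum>k<m+2. indicator {S b - x .. S a} (t + real k * x) :: real)"
          by (rule sum_nonneg) simp
        then show ?thesis using False by simp
      qed
    qed
    finally have "F t \<ge> (\<Sum>b\<le>n. \<Sum>a<b. (if \<kappa> a = \<kappa> b then 1 else 0 :: real))" .
    moreover have "2 * (\<Sum>b\<le>n. \<Sum>a<b. (if \<kappa> a = \<kappa> b then 1 else 0 :: real))
         \<ge> 2 * real ((n+1) div p) * (real n + 1) - real p * real ((n+1) div p) * (real ((n+1) div p) + 1)"
      by (rule pairs_lower) (use p in \<open>auto simp: \<kappa>_def\<close>)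
    ultimately show ?thesis unfolding Lf_def by simp
  qed
  have bound2: "F t \<ge> Lf n (m+2)" if "t \<in> {-x<..<r-x}" for t
  proof (rule Fge)
    show "-x \<le> t" "t \<le> 0" using that rx by auto
    show "\<forall>a\<le>n. nat \<lfloor>(S a - t)/x\<rfloor> < m+2"
    proof (intro allI impI)
      fix a assume a: "a \<le> n"
      have "S a - t < real (m+2) * x" using Sv[OF a] that m2 by (auto simp: algebra_simps)
      then show "nat \<lfloor>(S a - t)/x\<rfloor> < m+2" using kappa_bound[OF x _ Snn[OF a]] that rx by auto
    qed
  qed
  have bound1: "F t \<ge> Lf n (m+1)" if "t \<in> {r-x<..<0}" for t
  proof (rule Fge)
    show "-x \<le> t" "t \<le> 0" using that r0 by auto
    show "\<forall>a\<le>n. nat \<lfloor>(S a - t)/x\<rfloor> < m+1"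
    proof (intro allI impI)
      fix a assume a: "a \<le> n"
      have "S a - t < real (m+1) * x" using Sv[OF a] that unfolding r_def by (auto simp: algebra_simps)
      then show "nat \<lfloor>(S a - t)/x\<rfloor> < m+1" using kappa_bound[OF x _ Snn[OF a]] that by auto
    qed
  qed
  have split: "integral {-x..0} F = integral {-x..r-x} F + integral {r-x..0} F"
    using Henstock_Kurzweil_Integration.integral_combine[of "-x" "r-x" 0 F] Fint r0 rx by simp
  have I2: "integral {-x..r-x} F \<ge> r * Lf n (m+2)"
  proof -
    have "integral {-x..r-x} F = integral {-x<..<r-x} F" by (rule integral_open_interval_real)
    also have "\<dots> \<ge> integral {-x<..<r-x} (\<lambda>_. Lf n (m+2))"
      by (rule integral_le[OF _ _ bound2]) (auto simp: integrable_on_open_interval_real Fint)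
    also have "integral {-x<..<r-x} (\<lambda>_. Lf n (m+2)) = r * Lf n (m+2)"
      using integral_open_interval_real[of "-x" "r-x" "\<lambda>_. Lf n (m+2)"] r0 by simp
    finally show ?thesis .
  qed
  have I1: "integral {r-x..0} F \<ge> y * Lf n (m+1)"
  proof -
    have "integral {r-x..0} F = integral {r-x<..<0} F" by (rule integral_open_interval_real)
    also have "\<dots> \<ge> integral {r-x<..<0} (\<lambda>_. Lf n (m+1))"
      by (rule integral_le[OF _ _ bound1]) (auto simp: integrable_on_open_interval_real Fint)
    also have "integral {r-x<..<0} (\<lambda>_. Lf n (m+1)) = y * Lf n (m+1)"
      using integral_open_interval_real[of "r-x" 0 "\<lambda>_. Lf n (m+1)"] rx unfolding y_def by simp
    finally show ?thesis .
  qed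
  have "integral {-x..0} F \<ge> r * Lf n (m+2) + y * Lf n (m+1)" using split I1 I2 by simp
  then show ?thesis using f_eq2 unfolding F_def[abs_def] r_def y_def by (simp add: algebra_simps)
qed



definition PS :: "(nat \<Rightarrow> real) \<Rightarrow> nat \<Rightarrow> real" where
  "PS w a = (\<Sum>i=1..a. w i)"

lemma swap_tri:
  fixes n :: nat and G :: "nat \<Rightarrow> nat \<Rightarrow> real"
  shows "(\<Sum>l=1..n. \<Sum>k=l..n. G l k) = (\<Sum>k=1..n. \<Sum>l=1..k. (G l k :: real))"
proof (induction n)
  case 0 then show ?case by simp
next
  case (Suc n)
  have "(\<Sum>l=1..Suc n. \<Sum>k=l..Suc n. G l k) = (\<Sum>l=1..n. \<Sum>k=l..Suc n. G l k) + G (Suc n) (Suc n)"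
    by simp
  also have "(\<Sum>l=1..n. \<Sum>k=l..Suc n. G l k) = (\<Sum>l=1..n. (\<Sum>k=l..n. G l k) + G l (Suc n))"
    by (rule sum.cong) auto
  also have "\<dots> = (\<Sum>l=1..n. \<Sum>k=l..n. G l k) + (\<Sum>l=1..n. G l (Suc n))"
    by (simp add: sum.distrib)
  finally show ?case using Suc by simp
qed

lemma PS_diff: "a \<le> k \<Longrightarrow> (\<Sum>i=Suc a..k. w i) = PS w k - PS w a"
proof (induction k)
  case 0 then show ?case by (simp add: PS_def)
next
  case (Suc k)
  show ?case
  proof (cases "a \<le> k")
    case True then show ?thesis using Suc by (simp add: PS_def)
  next
    case False then have "a = Suc k" using Suc.prems by simp
    then show ?thesis by simp
  qed
qed

lemma fobj_pairs: "fobj n x w = (\<Sum>b\<le>n. \<Sum>a<b. max (x - (PS w b - PS w a)) 0)"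
proof -
  have "fobj n x w = (\<Sum>k=1..n. \<Sum>l=1..k. max (x - (\<Sum>i=l..k. w i)) 0)"
    unfolding fobj_def by (rule swap_tri)
  also have "\<dots> = (\<Sum>k=1..n. \<Sum>a<k. max (x - (PS w k - PS w a)) 0)"
  proof (rule sum.cong[OF refl])
    fix k assume "k \<in> {1..n}"
    have "(\<Sum>l=1..k. max (x - (\<Sum>i=l..k. w i)) 0) = (\<Sum>a<k. max (x - (\<Sum>i=Suc a..k. w i)) 0)"
      using sum.atLeast1_atMost_eq[of "\<lambda>l. max (x - (\<Sum>i=l..k. w i)) 0" k] by simp
    also have "\<dots> = (\<Sum>a<k. max (x - (PS w k - PS w a)) 0)"
      by (rule sum.cong) (auto simp: PS_diff)
    finally show "(\<Sum>l=1..k. max (x - (\<Sum>i=l..k. w i)) 0) = (\<Sum>a<k. max (x - (PS w k - PS w a)) 0)" .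
  qed
  also have "\<dots> = (\<Sum>b\<le>n. \<Sum>a<b. max (x - (PS w b - PS w a)) 0)"
  proof -
    have "(\<Sum>b\<le>n. \<Sum>a<b. max (x - (PS w b - PS w a)) 0) = (\<Sum>b=0..n. \<Sum>a<b. max (x - (PS w b - PS w a)) 0)"
      by (simp add: atMost_atLeast0)
    also have "\<dots> = (\<Sum>b=Suc 0..n. \<Sum>a<b. max (x - (PS w b - PS w a)) 0)"
      by (subst sum.atLeast_Suc_atMost) auto
    finally show ?thesis by simp
  qed
  finally show ?thesis .
qed

lemma pair_term_bound:
  fixes y r x :: real and ia ib ja jb :: nat
  assumes "y \<ge> 0" "r \<ge> 0" "x = y + r" "ia \<le> ib" "ja \<le> jb"
  shows "max (x - ((y * real ib + r * real jb) - (y * real ia + r * real ja))) 0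
         \<le> y * (if ia = ib then 1 else 0) + r * (if ja = jb then 1 else 0)"
proof -
  have A: "y * real ib - y * real ia \<ge> y * (if ia = ib then 0 else 1)"
  proof (cases "ia = ib")
    case False then have "real ib - real ia \<ge> 1" using assms(4) by auto
    then have "y * (real ib - real ia) \<ge> y * 1" using assms(1) by (intro mult_left_mono) auto
    then show ?thesis using False by (simp add: algebra_simps)
  qed simp
  have B: "r * real jb - r * real ja \<ge> r * (if ja = jb then 0 else 1)"
  proof (cases "ja = jb")
    case False then have "real jb - real ja \<ge> 1" using assms(5) by auto
    then have "r * (real jb - real ja) \<ge> r * 1" using assms(2) by (intro mult_left_mono) auto
    then show ?thesis using False by (simp add: algebra_simps)
  qed simp
  have "x - ((y * real ib + r * real jb) - (y * real ia + r * real ja)) \<le> y * (if ia = ib then 1 else 0) + r * (if ja = jb then 1 else 0)"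
    using A B assms(3) by (auto split: if_splits)
  moreover have "0 \<le> y * (if ia = ib then 1 else 0) + r * (if ja = jb then 1 else 0)"
    using assms(1,2) by auto
  ultimately show ?thesis by simp
qed

lemma gaps_facts:
  assumes "gaps_ok n (J+1) ((n+1) div (J+1)) d" "(n+1) div (J+1) \<ge> 1"
  shows "\<forall>k. 1 \<le> k \<and> k \<le> J+1 \<longrightarrow> d k \<ge> 1" "Ypos d (J+1) = n+1"
  using assms unfolding gaps_ok_def Ypos_def by force+

lemma pairs_gap:
  assumes g: "gaps_ok n (J+1) ((n+1) div (J+1)) d" and D1: "(n+1) div (J+1) \<ge> 1"
  shows "(\<Sum>b\<le>n. \<Sum>a<b. (if kap J d a = kap J d b then 1 else 0 :: real)) = Lf n (J+1)"
proof -
  note gf = gaps_facts[OF g D1]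
  define D where "D = (n+1) div (J+1)"
  have K: "\<forall>a\<le>n. kap J d a \<in> {..<J+1}" using kap_le[of J d] by (auto simp: less_Suc_eq_le)
  have "2 * (\<Sum>b\<le>n. \<Sum>a<b. (if kap J d a = kap J d b then 1 else 0 :: real))
     = (\<Sum>k<J+1. real (cnt (kap J d) n k) * (real (cnt (kap J d) n k) - 1))"
    by (rule pairs_identity[OF _ K]) simp
  also have "\<dots> = (\<Sum>k<J+1. 2 * real D * real (d (k+1)) - real D * (real D + 1))"
  proof (rule sum.cong[OF refl])
    fix k assume k: "k \<in> {..<J+1}"
    have c: "cnt (kap J d) n k = d (k+1)" using cnt_kap[OF gf] k by auto
    have "d (k+1) = D \<or> d (k+1) = D + 1" using g k unfolding gaps_ok_def D_def by auto
    then show "real (cnt (kap J d) n k) * (real (cnt (kap J d) n k) - 1) = 2 * real D * real (d (k+1)) - real D * (real D + 1)"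
      unfolding c by (rule quad_eq)
  qed
  also have "\<dots> = 2 * real D * (\<Sum>k<J+1. real (d (k+1))) - real (J+1) * real D * (real D + 1)"
    by (simp only: sum_subtractf sum_distrib_left[symmetric] sum_constant card_lessThan) (simp add: algebra_simps)
  also have "(\<Sum>k<J+1. real (d (k+1))) = real n + 1"
  proof -
    have "(\<Sum>k<J+1. real (d (k+1))) = (\<Sum>k=1..J+1. real (d k))"
      using sum.atLeast1_atMost_eq[of "\<lambda>k. real (d k)" "J+1"] by simp
    also have "\<dots> = real (\<Sum>k=1..J+1. d k)" by simp
    also have "\<dots> = real n + 1" using g unfolding gaps_ok_def by simp
    finally show ?thesis .
  qed
  finally show ?thesis unfolding Lf_def D_def by simp
qed



lemma spike_zero_out:
  assumes "\<forall>k. 1 \<le> k \<and> k \<le> J+1 \<longrightarrow> d k \<ge> 1" "Ypos d (J+1) = n+1" "i \<notin> {1..n}"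
  shows "spike_vec J d c i = 0"
proof -
  have "\<not> (\<exists>j\<in>{1..J}. Ypos d j = i)"
  proof
    assume "\<exists>j\<in>{1..J}. Ypos d j = i"
    then obtain j where j: "j \<in> {1..J}" "Ypos d j = i" by auto
    have "Ypos d 0 < Ypos d j" using Ypos_strict[OF assms(1), of 0 j] j by auto
    moreover have "Ypos d j < Ypos d (J+1)" using Ypos_strict[OF assms(1), of j "J+1"] j by auto
    ultimately show False using j assms(2,3) by auto
  qed
  then show ?thesis unfolding spike_vec_def spike_mem by auto
qed

lemma kap_full:
  assumes "\<forall>k. 1 \<le> k \<and> k \<le> J+1 \<longrightarrow> d k \<ge> 1" "Ypos d (J+1) = n+1"
  shows "kap J d n = J"
proof -
  have "{j\<in>{1..J}. Ypos d j \<le> n} = {1..J}"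
  proof (rule set_eqI, rule iffI)
    fix j assume j: "j \<in> {1..J}"
    have "Ypos d j < Ypos d (J+1)" using Ypos_strict[OF assms(1), of j "J+1"] j by auto
    then show "j \<in> {j\<in>{1..J}. Ypos d j \<le> n}" using j assms(2) by auto
  qed auto
  then show ?thesis by (simp add: kap_def)
qed

lemma gamma_props:
  fixes n m :: nat and x v y r :: real
  assumes x: "x > 0" and m1: "real m * x \<le> v" and m2: "v < (real m + 1) * x" and mn: "m + 1 \<le> n"
    and r: "r = v - real m * x" and y: "y = x - r" and u: "u \<in> Gamma n m y r"
  shows "u \<in> Lambda n v" "fobj n x u \<le> y * Lf n (m+1) + r * Lf n (m+2)"
proof -
  obtain dy dr where u_eq: "u = (\<lambda>i. spike_vec m dy y i + spike_vec (m+1) dr r i)"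
    and gy: "gaps_ok n (m+1) ((n+1) div (m+1)) dy" and gr0: "gaps_ok n (m+2) ((n+1) div (m+2)) dr"
    using u unfolding Gamma_def by auto
  have gr: "gaps_ok n ((m+1)+1) ((n+1) div ((m+1)+1)) dr" using gr0 by (simp add: numeral_2_eq_2)
  have Dy: "(n+1) div (m+1) \<ge> 1" using mn by (simp add: Suc_le_eq div_greater_zero_iff)
  have Dr: "(n+1) div ((m+1)+1) \<ge> 1" using mn by (simp add: Suc_le_eq div_greater_zero_iff)
  note fy = gaps_facts[OF gy Dy] and fr = gaps_facts[OF gr Dr]
  have fy': "\<forall>k. 1 \<le> k \<and> k \<le> m \<longrightarrow> dy k \<ge> 1" using fy(1) by auto
  have fr': "\<forall>k. 1 \<le> k \<and> k \<le> m+1 \<longrightarrow> dr k \<ge> 1" using fr(1) by auto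
  have r0: "r \<ge> 0" and y0: "y \<ge> 0" using m1 m2 r y by (auto simp: algebra_simps)
  have PSu: "PS u a = y * real (kap m dy a) + r * real (kap (m+1) dr a)" for a
    unfolding PS_def u_eq sum.distrib spike_prefix[OF fy'] spike_prefix[OF fr'] ..
  show "u \<in> Lambda n v"
    unfolding Lambda_def
  proof (intro CollectI conjI ballI allI impI)
    fix i assume "i \<in> {1..n}"
    show "0 \<le> u i" unfolding u_eq spike_vec_def using r0 y0 by auto
  next
    fix i assume i: "i \<notin> {1..n}"
    show "u i = 0" unfolding u_eq using spike_zero_out[OF fy i] spike_zero_out[OF fr i] by simp
  next
    have "(\<Sum>i=1..n. u i) = PS u n" by (simp add: PS_def)
    also have "\<dots> = y * real m + r * real (m+1)"
      unfolding PSu kap_full[OF fy] kap_full[OF fr] ..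
    also have "\<dots> = v" by (simp add: y r algebra_simps)
    finally show "(\<Sum>i=1..n. u i) = v" .
  qed
  have "fobj n x u = (\<Sum>b\<le>n. \<Sum>a<b. max (x - (PS u b - PS u a)) 0)" by (rule fobj_pairs)
  also have "\<dots> \<le> (\<Sum>b\<le>n. \<Sum>a<b. y * (if kap m dy a = kap m dy b then 1 else 0) + r * (if kap (m+1) dr a = kap (m+1) dr b then 1 else 0))"
  proof (intro sum_mono)
    fix b a assume "b \<in> {..n}" "a \<in> {..<b}"
    then have ab: "a \<le> b" by auto
    show "max (x - (PS u b - PS u a)) 0 \<le> y * (if kap m dy a = kap m dy b then 1 else 0) + r * (if kap (m+1) dr a = kap (m+1) dr b then 1 else 0)"
      unfolding PSu by (rule pair_term_bound) (use y0 r0 y ab kap_mono in auto)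
  qed
  also have "\<dots> = y * (\<Sum>b\<le>n. \<Sum>a<b. (if kap m dy a = kap m dy b then 1 else 0 :: real))
                 + r * (\<Sum>b\<le>n. \<Sum>a<b. (if kap (m+1) dr a = kap (m+1) dr b then 1 else 0 :: real))"
    by (simp add: sum.distrib sum_distrib_left)
  also have "\<dots> = y * Lf n (m+1) + r * Lf n (m+2)"
    using pairs_gap[OF gy Dy] pairs_gap[OF gr Dr] by (simp add: numeral_2_eq_2)
  finally show "fobj n x u \<le> y * Lf n (m+1) + r * Lf n (m+2)" .
qed

lemma conv_Lambda:
  assumes "\<forall>j<K. 0 \<le> c j \<and> u j \<in> Lambda n v" "(\<Sum>j<K. c j) = 1"
  shows "(\<lambda>i. \<Sum>j<K. c j * u j i) \<in> Lambda n v"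
  unfolding Lambda_def
proof (intro CollectI conjI ballI allI impI)
  fix i assume i: "i \<in> {1..n}"
  show "0 \<le> (\<Sum>j<K. c j * u j i)"
    using assms(1) i by (intro sum_nonneg) (auto simp: Lambda_def)
next
  fix i assume i: "i \<notin> {1..n}"
  show "(\<Sum>j<K. c j * u j i) = 0"
    using assms(1) i by (intro sum.neutral) (auto simp: Lambda_def)
next
  have "(\<Sum>i=1..n. \<Sum>j<K. c j * u j i) = (\<Sum>j<K. c j * (\<Sum>i=1..n. u j i))"
    by (subst sum.swap) (simp add: sum_distrib_left)
  also have "\<dots> = (\<Sum>j<K. c j * v)"
    using assms(1) by (intro sum.cong) (auto simp: Lambda_def)
  also have "\<dots> = v" using assms(2) by (simp add: sum_distrib_right[symmetric])
  finally show "(\<Sum>i=1..n. \<Sum>j<K. c j * u j i) = v" .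
qed

lemma conv_fobj:
  assumes c: "\<forall>j<K. 0 \<le> c j" and c1: "(\<Sum>j<K. c j) = 1"
  shows "fobj n x (\<lambda>i. \<Sum>j<K. c j * u j i) \<le> (\<Sum>j<K. c j * fobj n x (u j))"
proof -
  have "(\<Sum>j<K. c j * fobj n x (u j)) = (\<Sum>l=1..n. \<Sum>k=l..n. \<Sum>j<K. c j * max (x - (\<Sum>i=l..k. u j i)) 0)"
    unfolding fobj_def sum_distrib_left
    by (subst sum.swap, rule sum.cong[OF refl], subst sum.swap, rule refl)
  moreover have "max (x - (\<Sum>i=l..k. \<Sum>j<K. c j * u j i)) 0 \<le> (\<Sum>j<K. c j * max (x - (\<Sum>i=l..k. u j i)) 0)" for l k
  proof -
    have "x - (\<Sum>i=l..k. \<Sum>j<K. c j * u j i) = (\<Sum>j<K. c j * (x - (\<Sum>i=l..k. u j i)))"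
    proof -
      have "(\<Sum>i=l..k. \<Sum>j<K. c j * u j i) = (\<Sum>j<K. c j * (\<Sum>i=l..k. u j i))"
        by (subst sum.swap) (simp add: sum_distrib_left)
      moreover have "x = (\<Sum>j<K. c j * x)" using c1 by (simp add: sum_distrib_right[symmetric])
      ultimately show ?thesis by (simp add: right_diff_distrib sum_subtractf)
    qed
    also have "\<dots> \<le> (\<Sum>j<K. c j * max (x - (\<Sum>i=l..k. u j i)) 0)"
      using c by (intro sum_mono mult_left_mono) auto
    finally have A: "x - (\<Sum>i=l..k. \<Sum>j<K. c j * u j i) \<le> (\<Sum>j<K. c j * max (x - (\<Sum>i=l..k. u j i)) 0)" .
    have B: "0 \<le> (\<Sum>j<K. c j * max (x - (\<Sum>i=l..k. u j i)) 0)"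
      using c by (intro sum_nonneg mult_nonneg_nonneg) auto
    show ?thesis using A B by simp
  qed
  then have "(\<Sum>l=1..n. \<Sum>k=l..n. max (x - (\<Sum>i=l..k. \<Sum>j<K. c j * u j i)) 0)
     \<le> (\<Sum>l=1..n. \<Sum>k=l..n. \<Sum>j<K. c j * max (x - (\<Sum>i=l..k. u j i)) 0)"
    by (intro sum_mono)
  ultimately show ?thesis unfolding fobj_def by simp
qed

theorem mainTheorem2:
  fixes n :: nat and x v :: real
  assumes "n \<ge> 1" and "x > 0" and "0 < v" and "v < real n * x"
  defines "m \<equiv> nat \<lfloor>v / x\<rfloor>"
  defines "r \<equiv> v - real m * x"
  defines "y \<equiv> x - r"
  shows "\<forall>u \<in> conv_hull (Gamma n m y r).
           u \<in> Lambda n v \<and> (\<forall>w \<in> Lambda n v. fobj n x u \<le> fobj n x w)"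
proof -
  have x: "x > 0" by fact
  have q0: "0 \<le> v / x" using assms by simp
  have fl: "real m = of_int \<lfloor>v / x\<rfloor>" unfolding m_def using q0 by simp
  have m1: "real m * x \<le> v"
  proof -
    have "real m \<le> v / x" unfolding fl by (rule of_int_floor_le)
    then show ?thesis using x by (simp add: field_simps)
  qed
  have m2: "v < (real m + 1) * x"
  proof -
    have "v / x < real m + 1" unfolding fl by (rule real_of_int_floor_add_one_gt)
    then show ?thesis using x by (simp add: field_simps)
  qed
  have mn: "m + 1 \<le> n"
  proof -
    have "v / x < real n" using assms(4) x by (simp add: field_simps)
    moreover have "real m \<le> v / x" unfolding fl by (rule of_int_floor_le)
    ultimately have "real m < real n" by linarith
    then show ?thesis by simp
  qed
  define LB where "LB = y * Lf n (m+1) + r * Lf n (m+2)"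
  have lower: "LB \<le> fobj n x w" if w: "w \<in> Lambda n v" for w
  proof -
    have wnn: "\<And>i. i \<in> {1..n} \<Longrightarrow> 0 \<le> w i" using w by (auto simp: Lambda_def)
    have mono: "PS w a \<le> PS w b" if "a \<le> b" "b \<le> n" for a b
    proof -
      have "PS w b - PS w a = (\<Sum>i=Suc a..b. w i)" using PS_diff[OF that(1)] by simp
      also have "\<dots> \<ge> 0" using wnn that by (intro sum_nonneg) auto
      finally show ?thesis by simp
    qed
    have "LB \<le> (\<Sum>b\<le>n. \<Sum>a<b. max (x - (PS w b - PS w a)) 0)"
      using LB_main[of n "PS w" v x m, OF mono _ _ x m1 m2] w
      unfolding LB_def y_def r_def by (simp add: PS_def Lambda_def)
    then show ?thesis by (simp add: fobj_pairs)
  qed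
  show ?thesis
  proof (rule ballI)
    fix u assume "u \<in> conv_hull (Gamma n m y r)"
    then obtain K :: nat and c :: "nat \<Rightarrow> real" and uu where cu: "\<forall>j<K. 0 \<le> c j \<and> uu j \<in> Gamma n m y r" and c1: "(\<Sum>j<K. c j) = 1"
      and u_eq: "u = (\<lambda>i. \<Sum>j<K. c j * uu j i)"
      unfolding conv_hull_def by blast
    note gp = gamma_props[OF x m1 m2 mn r_def[THEN meta_eq_to_obj_eq] y_def[THEN meta_eq_to_obj_eq]]
    have A: "u \<in> Lambda n v" unfolding u_eq
      by (rule conv_Lambda[OF _ c1]) (use cu gp in auto)
    have B: "\<forall>w\<in>Lambda n v. fobj n x u \<le> fobj n x w"
    proof
      fix w assume w: "w \<in> Lambda n v"
      have "fobj n x u \<le> (\<Sum>j<K. c j * fobj n x (uu j))"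
        unfolding u_eq by (rule conv_fobj[OF _ c1]) (use cu in auto)
      also have "\<dots> \<le> (\<Sum>j<K. c j * LB)"
        using cu gp(2) unfolding LB_def by (intro sum_mono mult_left_mono) auto
      also have "\<dots> = LB" using c1 by (simp add: sum_distrib_right[symmetric])
      also have "\<dots> \<le> fobj n x w" using lower[OF w] .
      finally show "fobj n x u \<le> fobj n x w" .
    qed
    show "u \<in> Lambda n v \<and> (\<forall>w\<in>Lambda n v. fobj n x u \<le> fobj n x w)" using A B by blast
  qed
qed


end
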